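(* Consider the patient model in the context and let $z_t:=[x_t\ u_t^\top\ d_t^\top]^\top$. With $\bar\Gamma:=(C_x^2+2)I_{2M+1}$, where $C_x:=\frac{\bar b+\bar c+\bar w}{1-\bar a}$, we have $\mathbf P\big[\sum_{t=1}^Tz_tz_t^\top\not\preceq T\bar\Gamma\big]=0$, i.e. $\sum_{t=1}^Tz_tz_t^\top\preceq T\bar\Gamma$ almost surely.
   Context: Patient model: $M\geq1$ treatments; $\mathcal U:=\{v\in\{0,1\}^M:\|v\|_0\leq1\}$. State $x_t\in\mathbb R$ evolves as $x_{t+1}=ax_t+b^\top u_t+c^\top d_t+w_t$, with actions $u_t\in\mathcal U$ and adherence $d_t\in\mathcal U$, $d^i_t\mid x_t,u^i_t\sim\mathrm{Bernoulli}(u^i_t\sigma(x_t+\mu_i))$, $\sigma$ the sigmoid. Parameters: $a\in[0,\bar a]$, known $\bar a\in(0,1)$, $\|b\|_\infty\leq\bar b$, $\|c\|_\infty\leq\bar c$, $\mu\in[-\bar\mu,\bar\mu]^M$. $x_t,u_t,d_t$ fully observed. Noise $w_t$ i.i.d., zero-symmetric, $\sigma_s^2$-subgaussian, $|w_t|\leq\bar w$ ($\bar w>0$), log-concave density, known variance $\sigma_w^2>0$; $x_1$ distributed as $w_t$. $\preceq$ is the Loewner order. *)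

theory Defs
  imports "HOL-Probability.Probability"
begin

definition sigmoid :: "real \<Rightarrow> real" where
  "sigmoid s = 1 / (1 + exp (- s))"

text \<open>Action/adherence set U = {v in {0,1}^m : ||v||_0 <= 1}; vectors in R^m are
  represented as functions nat => real, only the coordinates i < m being relevant.\<close>
definition actset :: "nat \<Rightarrow> (nat \<Rightarrow> real) set" where
  "actset m = {v. (\<forall>i<m. v i \<in> {0, 1}) \<and> card {i\<in>{..<m}. v i \<noteq> 0} \<le> 1}"

definition zvec :: "nat \<Rightarrow> real \<Rightarrow> (nat \<Rightarrow> real) \<Rightarrow> (nat \<Rightarrow> real) \<Rightarrow> nat \<Rightarrow> real" where
  "zvec m x u d j = (if j = 0 then x else if j \<le> m then u (j - 1) else d (j - m - 1))"

definition loewner_le :: "nat \<Rightarrow> (nat \<Rightarrow> nat \<Rightarrow> real) \<Rightarrow> (nat \<Rightarrow> nat \<Rightarrow> real) \<Rightarrow> bool" where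
  "loewner_le n A B \<longleftrightarrow> (\<forall>v::nat \<Rightarrow> real. (\<Sum>i<n. \<Sum>j<n. v i * (B i j - A i j) * v j) \<ge> 0)"

definition log_concave :: "(real \<Rightarrow> real) \<Rightarrow> bool" where
  "log_concave f \<longleftrightarrow> (\<forall>x y \<theta>. 0 \<le> \<theta> \<and> \<theta> \<le> 1 \<longrightarrow>
      f x powr \<theta> * f y powr (1 - \<theta>) \<le> f (\<theta> * x + (1 - \<theta>) * y))"

end

theory Submission
  imports Defs
begin

lemma actset_sum_bound:
  assumes v: "v \<in> actset m" and g: "\<forall>i<m. \<bar>g i\<bar> \<le> B" and B: "0 \<le> B"
  shows "\<bar>\<Sum>i<m. g i * v i\<bar> \<le> B"
proof -
  define S where "S = {i\<in>{..<m}. v i \<noteq> 0}"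
  have cS: "card S \<le> 1" and v01: "\<forall>i<m. v i \<in> {0,1}" using v by (auto simp: actset_def S_def)
  have fS: "finite S" by (simp add: S_def)
  have "(\<Sum>i<m. g i * v i) = (\<Sum>i\<in>S. g i * v i)"
    by (rule sum.mono_neutral_right) (auto simp: S_def)
  also have "\<dots> = (\<Sum>i\<in>S. g i)"
    by (rule sum.cong) (use v01 in \<open>auto simp: S_def\<close>)
  finally have e: "(\<Sum>i<m. g i * v i) = (\<Sum>i\<in>S. g i)" .
  have "\<bar>\<Sum>i\<in>S. g i\<bar> \<le> (\<Sum>i\<in>S. \<bar>g i\<bar>)" by (rule sum_abs)
  also have "\<dots> \<le> (\<Sum>i\<in>S. B)" by (rule sum_mono) (use g in \<open>auto simp: S_def\<close>)
  also have "\<dots> = real (card S) * B" by simp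
  also have "\<dots> \<le> 1 * B" using cS B by (intro mult_right_mono) auto
  finally show ?thesis using e by simp
qed

lemma actset_sumsq:
  assumes v: "v \<in> actset m"
  shows "(\<Sum>i<m. (v i)\<^sup>2) \<le> 1"
proof -
  have "\<forall>i<m. \<bar>v i\<bar> \<le> 1" using v by (auto simp: actset_def)
  from actset_sum_bound[OF v this] show ?thesis by (simp add: power2_eq_square)
qed

lemma zvec_sumsq:
  assumes "u \<in> actset m" "d \<in> actset m"
  shows "(\<Sum>j<2*m+1. (zvec m x u d j)\<^sup>2) \<le> x\<^sup>2 + 2"
proof -
  have U: "{..<2*m+1} = {0} \<union> ({1..m} \<union> {m+1..2*m})" by auto
  have "(\<Sum>j<2*m+1. (zvec m x u d j)\<^sup>2) = x\<^sup>2 + ((\<Sum>j\<in>{1..m}. (zvec m x u d j)\<^sup>2) + (\<Sum>j\<in>{m+1..2*m}. (zvec m x u d j)\<^sup>2))"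
    unfolding U by (subst sum.union_disjoint; auto simp: sum.union_disjoint zvec_def)+
  also have "(\<Sum>j\<in>{1..m}. (zvec m x u d j)\<^sup>2) = (\<Sum>j\<in>{1..m}. (u (j-1))\<^sup>2)"
    by (rule sum.cong) (auto simp: zvec_def)
  also have "\<dots> = (\<Sum>i<m. (u i)\<^sup>2)"
    by (rule sum.reindex_bij_witness[where i="\<lambda>i. i+1" and j="\<lambda>j. j-1"]) auto
  also have "(\<Sum>j\<in>{m+1..2*m}. (zvec m x u d j)\<^sup>2) = (\<Sum>j\<in>{m+1..2*m}. (d (j-m-1))\<^sup>2)"
    by (rule sum.cong) (auto simp: zvec_def)
  also have "\<dots> = (\<Sum>i<m. (d i)\<^sup>2)"
    by (rule sum.reindex_bij_witness[where i="\<lambda>i. i+m+1" and j="\<lambda>j. j-m-1"]) auto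
  finally show ?thesis using actset_sumsq[OF assms(1)] actset_sumsq[OF assms(2)] by simp
qed

lemma quad_bound:
  fixes z :: "nat \<Rightarrow> nat \<Rightarrow> real"
  assumes "\<forall>t\<in>{1..T}. (\<Sum>j<n. (z t j)\<^sup>2) \<le> K"
  shows "loewner_le n (\<lambda>j k. \<Sum>t = 1..T. z t j * z t k) (\<lambda>j k. if j = k then real T * K else 0)"
  unfolding loewner_le_def
proof
  fix v :: "nat \<Rightarrow> real"
  have e1: "(\<Sum>i<n. \<Sum>j<n. v i * ((if i = j then real T * K else 0) - (\<Sum>t = 1..T. z t i * z t j)) * v j)
     = real T * K * (\<Sum>i<n. (v i)\<^sup>2) - (\<Sum>t=1..T. (\<Sum>i<n. v i * z t i)\<^sup>2)"
  proof -
    have A: "(\<Sum>i<n. \<Sum>j<n. v i * (if i = j then real T * K else 0) * v j) = real T * K * (\<Sum>i<n. (v i)\<^sup>2)"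
      by (simp add: if_distrib if_distribR sum_distrib_left power2_eq_square mult.commute mult.left_commute cong: if_cong)
    have B: "(\<Sum>i<n. \<Sum>j<n. v i * (\<Sum>t = 1..T. z t i * z t j) * v j) = (\<Sum>t=1..T. (\<Sum>i<n. v i * z t i)\<^sup>2)"
      apply (simp add: power2_eq_square sum_distrib_left sum_distrib_right mult.commute mult.left_commute)
      apply (subst sum.swap)
      apply (rule sum.swap)
      done
    have "(\<Sum>i<n. \<Sum>j<n. v i * ((if i = j then real T * K else 0) - (\<Sum>t = 1..T. z t i * z t j)) * v j)
       = (\<Sum>i<n. \<Sum>j<n. v i * (if i = j then real T * K else 0) * v j) - (\<Sum>i<n. \<Sum>j<n. v i * (\<Sum>t = 1..T. z t i * z t j) * v j)"
      by (simp add: right_diff_distrib left_diff_distrib sum_subtractf)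
    then show ?thesis using A B by simp
  qed
  have "(\<Sum>t=1..T. (\<Sum>i<n. v i * z t i)\<^sup>2) \<le> (\<Sum>t=1..T. (\<Sum>i<n. (v i)\<^sup>2) * K)"
  proof (rule sum_mono)
    fix t assume t: "t \<in> {1..T}"
    have "(\<Sum>i<n. v i * z t i)\<^sup>2 \<le> (\<Sum>i<n. (v i)\<^sup>2) * (\<Sum>i<n. (z t i)\<^sup>2)" by (rule Cauchy_Schwarz_ineq_sum)
    also have "\<dots> \<le> (\<Sum>i<n. (v i)\<^sup>2) * K" using assms t by (intro mult_left_mono) (auto intro: sum_nonneg)
    finally show "(\<Sum>i<n. v i * z t i)\<^sup>2 \<le> (\<Sum>i<n. (v i)\<^sup>2) * K" .
  qed
  also have "\<dots> = real T * K * (\<Sum>i<n. (v i)\<^sup>2)" by simp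
  finally show "0 \<le> (\<Sum>i<n. \<Sum>j<n. v i * ((if i = j then real T * K else 0) - (\<Sum>t = 1..T. z t i * z t j)) * v j)"
    using e1 by simp
qed

theorem proposition3:
  fixes P :: "'o measure"
    and m :: nat and T :: nat
    and a abar bbar cbar wbar mubar sigma_s sigma_w :: real
    and b c mu :: "nat \<Rightarrow> real"
    and x w :: "nat \<Rightarrow> 'o \<Rightarrow> real"
    and u d :: "nat \<Rightarrow> 'o \<Rightarrow> nat \<Rightarrow> real"
    and f :: "real \<Rightarrow> real"
  assumes P: "prob_space P"
    and m: "m \<ge> 1"
    and abar: "0 < abar" "abar < 1"
    and a: "0 \<le> a" "a \<le> abar"
    and b: "\<forall>i<m. \<bar>b i\<bar> \<le> bbar"
    and c: "\<forall>i<m. \<bar>c i\<bar> \<le> cbar"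
    and mu: "\<forall>i<m. - mubar \<le> mu i \<and> mu i \<le> mubar"
    and wbar: "wbar > 0"
    and sigma_w: "sigma_w > 0"
    \<comment> \<open>measurability of the observed processes\<close>
    and x_meas: "\<forall>t\<ge>1. x t \<in> borel_measurable P"
    and u_meas: "\<forall>t\<ge>1. \<forall>i<m. (\<lambda>\<omega>. u t \<omega> i) \<in> borel_measurable P"
    and d_meas: "\<forall>t\<ge>1. \<forall>i<m. (\<lambda>\<omega>. d t \<omega> i) \<in> borel_measurable P"
    \<comment> \<open>actions and adherence lie in U\<close>
    and u_U: "\<forall>t\<ge>1. \<forall>\<omega>\<in>space P. u t \<omega> \<in> actset m"
    and d_U: "\<forall>t\<ge>1. \<forall>\<omega>\<in>space P. d t \<omega> \<in> actset m"
    \<comment> \<open>adherence: d_t^i given (x_t, u_t^i) is Bernoulli(u_t^i sigmoid(x_t + mu_i))\<close>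
    and adherence: "\<forall>t\<ge>1. \<forall>i<m. \<forall>B \<in> sets (borel :: (real \<times> real) measure).
        measure P {\<omega>\<in>space P. (x t \<omega>, u t \<omega> i) \<in> B \<and> d t \<omega> i = 1}
        = (\<integral>\<omega>. indicator B (x t \<omega>, u t \<omega> i) * (u t \<omega> i * sigmoid (x t \<omega> + mu i)) \<partial>P)"
    \<comment> \<open>dynamics\<close>
    and dyn: "\<forall>t\<ge>1. \<forall>\<omega>\<in>space P. x (Suc t) \<omega> =
        a * x t \<omega> + (\<Sum>i<m. b i * u t \<omega> i) + (\<Sum>i<m. c i * d t \<omega> i) + w t \<omega>"
    \<comment> \<open>noise: i.i.d., symmetric, bounded, sub-Gaussian, log-concave density, variance sigma_w^2\<close>
    and w_indep: "prob_space.indep_vars P (\<lambda>_. borel) w {1..}"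
    and w_ident: "\<forall>t\<ge>1. distr P borel (w t) = distr P borel (w 1)"
    and w_density: "\<forall>t\<ge>1. distributed P lborel (w t) f"
    and f_logconc: "log_concave f"
    and w_sym: "\<forall>t\<ge>1. distr P borel (w t) = distr P borel (\<lambda>\<omega>. - w t \<omega>)"
    and w_bdd: "\<forall>t\<ge>1. AE \<omega> in P. \<bar>w t \<omega>\<bar> \<le> wbar"
    and w_subg: "\<forall>t\<ge>1. \<forall>l::real. integrable P (\<lambda>\<omega>. exp (l * w t \<omega>)) \<and>
        prob_space.expectation P (\<lambda>\<omega>. exp (l * w t \<omega>)) \<le> exp (l\<^sup>2 * sigma_s\<^sup>2 / 2)"
    and w_var: "\<forall>t\<ge>1. prob_space.variance P (w t) = sigma_w\<^sup>2"
    \<comment> \<open>initial state distributed as the noise\<close>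
    and x1: "distr P borel (x 1) = distr P borel (w 1)"
  shows "AE \<omega> in P.
    loewner_le (2 * m + 1)
      (\<lambda>j k. \<Sum>t = 1..T. zvec m (x t \<omega>) (u t \<omega>) (d t \<omega>) j * zvec m (x t \<omega>) (u t \<omega>) (d t \<omega>) k)
      (\<lambda>j k. if j = k then real T * (((bbar + cbar + wbar) / (1 - abar))\<^sup>2 + 2) else 0)"
proof -
  interpret prob_space P by (rule P)
  define C where "C = (bbar + cbar + wbar) / (1 - abar)"
  have bb: "0 \<le> bbar" using b m by force
  have cc: "0 \<le> cbar" using c m by force
  have C1: "C * (1 - abar) = bbar + cbar + wbar" using abar by (simp add: C_def)
  have Cw: "wbar \<le> C"
  proof -
    have "wbar * (1 - abar) \<le> C * (1 - abar)" using C1 bb cc abar wbar by (simp add: algebra_simps)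
        (use mult_nonneg_nonneg[of abar wbar] abar wbar in linarith)
    then show ?thesis using abar by simp
  qed
  have w1m: "w 1 \<in> borel_measurable P"
    using w_density distributed_measurable[of P lborel "w 1"] by fastforce
  have x1m: "x 1 \<in> borel_measurable P" using x_meas by auto
  have S: "{y \<in> space borel. \<bar>y::real\<bar> \<le> wbar} \<in> sets borel" by measurable
  have "AE y in distr P borel (w 1). \<bar>y\<bar> \<le> wbar"
    using AE_distr_iff[OF w1m S] w_bdd by auto
  then have "AE y in distr P borel (x 1). \<bar>y\<bar> \<le> wbar" using x1 by metis
  then have AEx1: "AE \<omega> in P. \<bar>x 1 \<omega>\<bar> \<le> wbar"
    using AE_distr_iff[OF x1m S] by auto
  have AEw: "AE \<omega> in P. \<forall>t. 1 \<le> t \<longrightarrow> \<bar>w t \<omega>\<bar> \<le> wbar"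
    unfolding AE_all_countable using w_bdd by auto
  show ?thesis
    using AEx1 AEw AE_space
  proof (eventually_elim)
    case (elim \<omega>)
    then have om: "\<omega> \<in> space P" by simp
    have xb: "\<bar>x t \<omega>\<bar> \<le> C" if "t \<ge> 1" for t
      using that
    proof (induction t rule: nat_induct_at_least)
      case base
      then show ?case using elim Cw by simp
    next
      case (Suc t)
      have e: "x (Suc t) \<omega> = a * x t \<omega> + (\<Sum>i<m. b i * u t \<omega> i) + (\<Sum>i<m. c i * d t \<omega> i) + w t \<omega>"
        using dyn Suc.hyps om by auto
      have B1: "\<bar>\<Sum>i<m. b i * u t \<omega> i\<bar> \<le> bbar"
        by (rule actset_sum_bound) (use u_U Suc.hyps om b bb in auto)
      have B2: "\<bar>\<Sum>i<m. c i * d t \<omega> i\<bar> \<le> cbar"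
        by (rule actset_sum_bound) (use d_U Suc.hyps om c cc in auto)
      have B3: "\<bar>w t \<omega>\<bar> \<le> wbar" using elim Suc.hyps by auto
      have "\<bar>a * x t \<omega>\<bar> \<le> abar * C"
      proof -
        have "\<bar>a * x t \<omega>\<bar> = a * \<bar>x t \<omega>\<bar>" using a by (simp add: abs_mult)
        also have "\<dots> \<le> abar * C" using a Suc.IH abar by (intro mult_mono) auto
        finally show ?thesis .
      qed
      then show ?case using e B1 B2 B3 C1 by (simp add: algebra_simps)
    qed
    have K: "\<forall>t\<in>{1..T}. (\<Sum>j<2*m+1. (zvec m (x t \<omega>) (u t \<omega>) (d t \<omega>) j)\<^sup>2) \<le> C\<^sup>2 + 2"
    proof
      fix t assume t: "t \<in> {1..T}"
      have "(\<Sum>j<2*m+1. (zvec m (x t \<omega>) (u t \<omega>) (d t \<omega>) j)\<^sup>2) \<le> (x t \<omega>)\<^sup>2 + 2"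
        by (rule zvec_sumsq) (use u_U d_U t om in auto)
      also have "(x t \<omega>)\<^sup>2 \<le> C\<^sup>2" using xb[of t] t power_mono[of "\<bar>x t \<omega>\<bar>" C 2] by simp
      finally show "(\<Sum>j<2*m+1. (zvec m (x t \<omega>) (u t \<omega>) (d t \<omega>) j)\<^sup>2) \<le> C\<^sup>2 + 2" by simp
    qed
    show ?case
      using quad_bound[where z="\<lambda>t. zvec m (x t \<omega>) (u t \<omega>) (d t \<omega>)", OF K] unfolding C_def by simp
  qed
qed

end
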